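(* Let $l,k\ge 2$ be integers, $q$ a prime number and $\mathbb{A}\subseteq\mathbb{Q}$. Then: (1) $\mathbb{A}\text{-}\mathcal{KS}(q^{2})\subseteq\mathbb{A}\text{-}\mathcal{KS}(q^{l})$; (2) if $(k-1)\mid(l-1)$, then $\mathbb{A}\text{-}\mathcal{KS}(q^{k})\subseteq\mathbb{A}\text{-}\mathcal{KS}(q^{l})$.
   Context: Every nonzero rational $\alpha$ is written $\alpha=\alpha_1/\alpha_2$ with $\alpha_1\in\mathbb{Z}$, $\alpha_2$ a positive integer and $\gcd(\alpha_1,\alpha_2)=1$. For an integer $N\ge 2$ and a nonzero rational $\alpha=\alpha_1/\alpha_2$, $N$ is called an $\alpha$-Korselt number if $N\neq\alpha$ and $\alpha_2p-\alpha_1$ divides $\alpha_2N-\alpha_1$ (in $\mathbb{Z}$) for every prime divisor $p$ of $N$. For $\mathbb{A}\subseteq\mathbb{Q}$, $\mathbb{A}\text{-}\mathcal{KS}(N)$ is the set of all $\beta\in\mathbb{A}\setminus\{0,N\}$ such that $N$ is a $\beta$-Korselt number. *)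

theory Defs
  imports Complex_Main "HOL-Computational_Algebra.Primes"
begin

definition korselt :: "rat \<Rightarrow> nat \<Rightarrow> bool" where
  "korselt \<alpha> N \<longleftrightarrow> N \<ge> 2 \<and> \<alpha> \<noteq> 0 \<and> \<alpha> \<noteq> of_nat N \<and>
     (\<forall>p. prime p \<and> p dvd N \<longrightarrow>
        (let (a1, a2) = quotient_of \<alpha> in (a2 * int p - a1) dvd (a2 * int N - a1)))"

definition KS :: "rat set \<Rightarrow> nat \<Rightarrow> rat set" where
  "KS A N = {\<beta> \<in> A - {0, of_nat N}. korselt \<beta> N}"

end

theory Submission
  imports Defs
begin

lemma pow_sub1_dvd: "(y::int) - 1 dvd y ^ t - 1"
proof (induction t)
  case 0 then show ?case by simp
next
  case (Suc t)
  have "y ^ Suc t - 1 = y * (y ^ t - 1) + (y - 1)" by (simp add: algebra_simps)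
  then show ?case using Suc by (metis dvd_add dvd_mult dvd_refl)
qed

lemma key:
  fixes x a1 a2 :: int
  assumes "(a2 * x - a1) dvd (a2 * x ^ k - a1)" "k \<ge> 1" "l \<ge> 1" "(k - 1) dvd (l - 1)"
  shows "(a2 * x - a1) dvd (a2 * x ^ l - a1)"
proof -
  let ?d = "a2 * x - a1"
  have e1: "a2 * x ^ k - a1 = x ^ (k - 1) * ?d + a1 * (x ^ (k - 1) - 1)"
    using assms(2) by (cases k) (auto simp: algebra_simps)
  have e2: "a2 * x ^ l - a1 = x ^ (l - 1) * ?d + a1 * (x ^ (l - 1) - 1)"
    using assms(3) by (cases l) (auto simp: algebra_simps)
  have "?d dvd a1 * (x ^ (k - 1) - 1)"
  proof -
    have "?d dvd (a2 * x ^ k - a1) - x ^ (k - 1) * ?d" using assms(1) by (rule dvd_diff) simp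
    then show ?thesis using e1 by simp
  qed
  moreover obtain t where t: "l - 1 = (k - 1) * t" using assms(4) by blast
  have "x ^ (k - 1) - 1 dvd x ^ (l - 1) - 1"
    unfolding t power_mult by (rule pow_sub1_dvd)
  ultimately have "?d dvd a1 * (x ^ (l - 1) - 1)"
    by (meson dvd_trans mult_dvd_mono dvd_refl)
  then have "?d dvd x ^ (l - 1) * ?d + a1 * (x ^ (l - 1) - 1)"
    by (rule dvd_add[OF dvd_mult[OF dvd_refl]])
  then show ?thesis using e2 by simp
qed

lemma main:
  fixes l k q :: nat and A :: "rat set"
  assumes "l \<ge> 2" and "k \<ge> 2" and "prime q" and "(k - 1) dvd (l - 1)"
  shows "KS A (q ^ k) \<subseteq> KS A (q ^ l)"
proof
  fix \<beta> assume b: "\<beta> \<in> KS A (q ^ k)"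
  obtain a1 a2 where qa: "quotient_of \<beta> = (a1, a2)" by (cases "quotient_of \<beta>")
  have q2: "q \<ge> 2" using assms(3) prime_ge_2_nat by blast
  have bA: "\<beta> \<in> A" "\<beta> \<noteq> 0" "\<beta> \<noteq> of_nat (q ^ k)" using b by (auto simp: KS_def)
  have kor: "korselt \<beta> (q ^ k)" using b by (auto simp: KS_def)
  have qdvd: "q dvd q ^ k" using assms(2) by (simp add: dvd_power)
  have dk: "(a2 * int q - a1) dvd (a2 * int (q ^ k) - a1)"
    using kor assms(3) qdvd qa unfolding korselt_def by auto
  have dl: "(a2 * int q - a1) dvd (a2 * int (q ^ l) - a1)"
    using key[OF _ _ _ assms(4), of a2 "int q" a1] dk assms(1,2) by simp
  have pd: "\<And>p. prime p \<Longrightarrow> p dvd q ^ l \<Longrightarrow> p = q"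
    using assms(3) prime_dvd_power primes_dvd_imp_eq by blast
  have neq: "\<beta> \<noteq> of_nat (q ^ l)"
  proof
    assume be: "\<beta> = of_nat (q ^ l)"
    have "k \<noteq> l" using bA(3) be by auto
    with assms have kl: "k < l"
    proof -
      have "k - 1 \<le> l - 1" using assms(4) assms(1) by (intro dvd_imp_le) auto
      then show ?thesis using \<open>k \<noteq> l\<close> assms(1,2) by linarith
    qed
    have "quotient_of \<beta> = (int (q ^ l), 1)" using be
    proof -
      have "(of_nat (q ^ l) :: rat) = of_int (int (q ^ l))" by (rule of_int_of_nat_eq[symmetric])
      then show ?thesis using be quotient_of_rat_of_int[of "int (q ^ l)"] by (simp only:)
    qed
    then have "a1 = int q ^ l" "a2 = 1" using qa by auto
    then have dv: "(int q - int q ^ l) dvd (int q ^ k - int q ^ l)" using dk by simp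
    define y where "y = int q"
    have y2: "y \<ge> 2" using q2 y_def by simp
    have ek: "int q ^ k = y * y ^ (k - 1)" using assms(2) y_def
      by (cases k) auto
    have el: "int q ^ l = y * y ^ (l - 1)" using assms(1) y_def
      by (cases l) auto
    have "y * (1 - y ^ (l - 1)) dvd y * (y ^ (k - 1) - y ^ (l - 1))"
      using dv ek el y_def by (simp add: algebra_simps)
    then have "(1 - y ^ (l - 1)) dvd (y ^ (k - 1) - y ^ (l - 1))"
      using y2 dvd_mult_cancel_left by simp
    then have "(y ^ (l - 1) - 1) dvd (y ^ (k - 1) - 1)"
    proof -
      assume h: "(1 - y ^ (l - 1)) dvd (y ^ (k - 1) - y ^ (l - 1))"
      have "(1 - y ^ (l - 1)) dvd (y ^ (k - 1) - y ^ (l - 1)) - (1 - y ^ (l - 1))"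
        using h by (rule dvd_diff) simp
      then have "(1 - y ^ (l - 1)) dvd (y ^ (k - 1) - 1)" by (simp add: algebra_simps)
      moreover have "1 - y ^ (l - 1) = - (y ^ (l - 1) - 1)" by simp
      ultimately show ?thesis by (simp only: minus_dvd_iff)
    qed
    moreover have "0 < y ^ (k - 1) - 1"
    proof -
      have "y ^ 1 \<le> y ^ (k - 1)" using y2 assms(2) by (intro power_increasing) auto
      then show ?thesis using y2 by simp
    qed
    moreover have "y ^ (k - 1) < y ^ (l - 1)"
      using y2 kl assms(2) by (intro power_strict_increasing) auto
    ultimately have "y ^ (l - 1) - 1 \<le> y ^ (k - 1) - 1" by (intro zdvd_imp_le) auto
    then show False using \<open>y ^ (k - 1) < y ^ (l - 1)\<close> by simp
  qed
  have "korselt \<beta> (q ^ l)"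
    unfolding korselt_def
  proof (intro conjI allI impI)
    have "q ^ 1 \<le> q ^ l" using q2 assms(1) by (intro power_increasing) auto
    then show "2 \<le> q ^ l" using q2 by simp
  next
    fix p assume "prime p \<and> p dvd q ^ l"
    then have "p = q" using pd by blast
    then show "let (a1, a2) = quotient_of \<beta> in (a2 * int p - a1) dvd (a2 * int (q ^ l) - a1)"
      using dl qa by simp
  qed (use bA neq in auto)
  then show "\<beta> \<in> KS A (q ^ l)" using bA neq by (simp add: KS_def)
qed

theorem proposition2p6:
  fixes l k q :: nat and A :: "rat set"
  assumes "l \<ge> 2" and "k \<ge> 2" and "prime q"
  shows "KS A (q ^ 2) \<subseteq> KS A (q ^ l) \<and>
         ((k - 1) dvd (l - 1) \<longrightarrow> KS A (q ^ k) \<subseteq> KS A (q ^ l))"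
  using main[OF assms(1) _ assms(3)] assms(2) by simp

end
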